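(* Let $x_1<x_2<\cdots<x_n$ be a partition of $[x_1,x_n]$, with $h_i=x_{i+1}-x_i$ ($1\le i\le n-1$) and $\hat h=\max_i h_i$. Let $f\in C^4([x_1,x_n])$ and $L>0$ with $|f^{(4)}(x)|\le L$ for all $x\in[x_1,x_n]$, and assume there is $K>0$ with $\hat h/h_i\le K$ for all $i=1,\dots,n-1$. Write $f_i=f(x_i)$, $f'_i=f'(x_i)$, $m_i=(f_{i+1}-f_i)/h_i$, $\lambda_i=\frac{h_{i+1}}{h_i+h_{i+1}}$, $\mu_i=\frac{h_i}{h_i+h_{i+1}}$. Let $\dot f_1=f'_1$, $\dot f_n=f'_n$ and let $\dot f_2,\dots,\dot f_{n-1}$ be the solution of $$\lambda_{i-1}\dot f_{i-1}+2\dot f_i+\mu_{i-1}\dot f_{i+1}=3(\lambda_{i-1}m_{i-1}+\mu_{i-1}m_i),\qquad i=2,\dots,n-1.$$ Fix an index $i_0$ with $1<i_0<n$, constants $p_{i_0},T>0$, and a number $\tilde f_{i_0}$ with $|f'_{i_0}-\tilde f_{i_0}|=T\hat h^{p_{i_0}}$. Define the modified values $\dot F_{i_0}$ by $(\dot F_{i_0})_{i_0}=\tilde f_{i_0}$ and $(\dot F_{i_0})_i=\dot f_i$ for $i\ne i_0$. Then $$|(\dot F_{i_0})_i-f'_i|=\begin{cases}O(\hat h^{p_{i_0}}),& i=i_0,\\ O(\hat h^3),& i\ne i_0.\end{cases}$$ Moreover, the piecewise cubic Hermite interpolant $P$ built with the derivative values $\dot F_{i_0}$ (on each $[x_i,x_{i+1}]$,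 $P$ is the cubic with $P(x_i)=f_i$, $P(x_{i+1})=f_{i+1}$, $P'(x_i)=(\dot F_{i_0})_i$, $P'(x_{i+1})=(\dot F_{i_0})_{i+1}$) has $C^2$ regularity on $[x_1,x_n]$ except at the points $x_{i_0-1},x_{i_0},x_{i_0+1}$.
   Context: $O(\hat h^q)$ denotes a quantity bounded in absolute value by $C\hat h^q$ with $C$ independent of the partition (it may depend on $f$, $L$, $K$, $T$). *)

theory Defs
  imports "HOL-Analysis.Analysis"
begin

text \<open>Partitions are indexed from 1 as in the paper: knots x 1 < ... < x n.\<close>

definition hh :: "(nat \<Rightarrow> real) \<Rightarrow> nat \<Rightarrow> real" where
  "hh x i = x (Suc i) - x i"

definition hmax :: "(nat \<Rightarrow> real) \<Rightarrow> nat \<Rightarrow> real" where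
  "hmax x n = Max ((\<lambda>i. hh x i) ` {1..<n})"

definition slope :: "(real \<Rightarrow> real) \<Rightarrow> (nat \<Rightarrow> real) \<Rightarrow> nat \<Rightarrow> real" where
  "slope f x i = (f (x (Suc i)) - f (x i)) / hh x i"

definition lam :: "(nat \<Rightarrow> real) \<Rightarrow> nat \<Rightarrow> real" where
  "lam x i = hh x (Suc i) / (hh x i + hh x (Suc i))"

definition mu :: "(nat \<Rightarrow> real) \<Rightarrow> nat \<Rightarrow> real" where
  "mu x i = hh x i / (hh x i + hh x (Suc i))"

definition spline_slopes ::
  "(real \<Rightarrow> real) \<Rightarrow> (real \<Rightarrow> real) \<Rightarrow> (nat \<Rightarrow> real) \<Rightarrow> nat \<Rightarrow> (nat \<Rightarrow> real) \<Rightarrow> bool" where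
  "spline_slopes f f' x n fd \<longleftrightarrow>
     fd 1 = f' (x 1) \<and> fd n = f' (x n) \<and>
     (\<forall>i\<in>{2..n-1}. lam x (i-1) * fd (i-1) + 2 * fd i + mu x (i-1) * fd (Suc i)
                    = 3 * (lam x (i-1) * slope f x (i-1) + mu x (i-1) * slope f x i))"

definition pw_cubic_hermite ::
  "(nat \<Rightarrow> real) \<Rightarrow> nat \<Rightarrow> (real \<Rightarrow> real) \<Rightarrow> (nat \<Rightarrow> real) \<Rightarrow> (real \<Rightarrow> real) \<Rightarrow> bool" where
  "pw_cubic_hermite x n f d P \<longleftrightarrow>
     (\<forall>i\<in>{1..<n}. \<exists>c0 c1 c2 c3 :: real.
        (\<forall>t\<in>{x i..x (Suc i)}. P t = c0 + c1 * t + c2 * t^2 + c3 * t^3) \<and>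
        P (x i) = f (x i) \<and> P (x (Suc i)) = f (x (Suc i)) \<and>
        c1 + 2 * c2 * x i + 3 * c3 * (x i)^2 = d i \<and>
        c1 + 2 * c2 * x (Suc i) + 3 * c3 * (x (Suc i))^2 = d (Suc i))"

definition C2_except_on :: "real set \<Rightarrow> real set \<Rightarrow> (real \<Rightarrow> real) \<Rightarrow> bool" where
  "C2_except_on S E P \<longleftrightarrow>
     (\<exists>P1 P2. (\<forall>t\<in>S - E. (P has_real_derivative P1 t) (at t within S) \<and>
                          (P1 has_real_derivative P2 t) (at t within S)) \<and>
              continuous_on (S - E) P2)"

end

theory Submission
  imports Defs
begin

lemma bound_step:
  fixes g g' ph ph' :: "real \<Rightarrow> real"
  assumes "u \<le> w"
    and dg: "\<And>s. s \<in> {u..w} \<Longrightarrow> (g has_real_derivative g' s) (at s within {u..w})"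
    and dp: "\<And>s. s \<in> {u..w} \<Longrightarrow> (ph has_real_derivative ph' s) (at s within {u..w})"
    and b: "\<And>s. s \<in> {u..w} \<Longrightarrow> \<bar>g' s\<bar> \<le> ph' s" and "g u = 0" "ph u = 0"
  shows "\<bar>g w\<bar> \<le> ph w"
proof -
  have "\<exists>y\<in>{u..w}. (\<lambda>s. ph s - g s) w - (\<lambda>s. ph s - g s) u = (*) (ph' y - g' y) (w - u)"
    apply (rule mvt_very_simple[OF \<open>u \<le> w\<close>])
    unfolding has_field_derivative_def[symmetric]
    by (intro DERIV_diff dp dg) auto
  then obtain y where y: "y \<in> {u..w}" "ph w - g w = (ph' y - g' y) * (w - u)" using assms by auto
  have "\<exists>y\<in>{u..w}. (\<lambda>s. ph s + g s) w - (\<lambda>s. ph s + g s) u = (*) (ph' y + g' y) (w - u)"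
    apply (rule mvt_very_simple[OF \<open>u \<le> w\<close>])
    unfolding has_field_derivative_def[symmetric]
    by (intro DERIV_add dp dg) auto
  then obtain z where z: "z \<in> {u..w}" "ph w + g w = (ph' z + g' z) * (w - u)" using assms by auto
  have "0 \<le> (ph' y - g' y) * (w - u)" using b[OF y(1)] assms(1) by (intro mult_nonneg_nonneg) auto
  moreover have "0 \<le> (ph' z + g' z) * (w - u)" using b[OF z(1)] assms(1) by (intro mult_nonneg_nonneg) auto
  ultimately show ?thesis using y z by auto
qed

lemma taylor_fwd:
  fixes g0 g1 g2 g3 g4 :: "real \<Rightarrow> real"
  assumes uv: "u \<le> v"
    and d0: "\<And>s. s \<in> {u..v} \<Longrightarrow> (g0 has_real_derivative g1 s) (at s within {u..v})"
    and d1: "\<And>s. s \<in> {u..v} \<Longrightarrow> (g1 has_real_derivative g2 s) (at s within {u..v})"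
    and d2: "\<And>s. s \<in> {u..v} \<Longrightarrow> (g2 has_real_derivative g3 s) (at s within {u..v})"
    and d3: "\<And>s. s \<in> {u..v} \<Longrightarrow> (g3 has_real_derivative g4 s) (at s within {u..v})"
    and b: "\<And>s. s \<in> {u..v} \<Longrightarrow> \<bar>g4 s\<bar> \<le> M"
  shows "\<bar>g1 v - g1 u - g2 u * (v - u) - g3 u * (v - u)^2 / 2\<bar> \<le> M * (v - u)^3 / 6"
    and "\<bar>g0 v - g0 u - g1 u * (v - u) - g2 u * (v - u)^2 / 2 - g3 u * (v - u)^3 / 6\<bar> \<le> M * (v - u)^4 / 24"
proof -
  have d0': "(g0 has_real_derivative g1 s) (at s within {u..w})" if "w \<in> {u..v}" "s \<in> {u..w}" for s w
    by (rule has_field_derivative_subset[OF d0]) (use that in auto)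
  have d1': "(g1 has_real_derivative g2 s) (at s within {u..w})" if "w \<in> {u..v}" "s \<in> {u..w}" for s w
    by (rule has_field_derivative_subset[OF d1]) (use that in auto)
  have d2': "(g2 has_real_derivative g3 s) (at s within {u..w})" if "w \<in> {u..v}" "s \<in> {u..w}" for s w
    by (rule has_field_derivative_subset[OF d2]) (use that in auto)
  have d3': "(g3 has_real_derivative g4 s) (at s within {u..w})" if "w \<in> {u..v}" "s \<in> {u..w}" for s w
    by (rule has_field_derivative_subset[OF d3]) (use that in auto)
  have e3: "\<bar>g3 w - g3 u\<bar> \<le> M * (w - u)" if w: "w \<in> {u..v}" for w
  proof (rule bound_step[where g="\<lambda>s. g3 s - g3 u" and ph="\<lambda>s. M * (s - u)" and g'=g4 and ph'="\<lambda>_. M"])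
    show "u \<le> w" using w by auto
    show "((\<lambda>s. g3 s - g3 u) has_real_derivative g4 s) (at s within {u..w})" if "s \<in> {u..w}" for s
      using d3'[OF w that] by (auto intro!: derivative_eq_intros)
    show "((\<lambda>s. M * (s - u)) has_real_derivative M) (at s within {u..w})" for s
      by (auto intro!: derivative_eq_intros)
    show "\<bar>g4 s\<bar> \<le> M" if "s \<in> {u..w}" for s using b[of s] that w by auto
  qed auto
  have e2: "\<bar>g2 w - g2 u - g3 u * (w - u)\<bar> \<le> M * (w - u)^2 / 2" if w: "w \<in> {u..v}" for w
  proof (rule bound_step[where g="\<lambda>s. g2 s - g2 u - g3 u * (s - u)" and ph="\<lambda>s. M * (s - u)^2 / 2" and g'="\<lambda>s. g3 s - g3 u" and ph'="\<lambda>s. M * (s - u)"])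
    show "u \<le> w" using w by auto
    show "((\<lambda>s. g2 s - g2 u - g3 u * (s - u)) has_real_derivative g3 s - g3 u) (at s within {u..w})" if "s \<in> {u..w}" for s
      using d2'[OF w that] by (auto intro!: derivative_eq_intros)
    show "((\<lambda>s. M * (s - u)^2 / 2) has_real_derivative M * (s - u)) (at s within {u..w})" for s
      by (auto intro!: derivative_eq_intros)
    show "\<bar>g3 s - g3 u\<bar> \<le> M * (s - u)" if "s \<in> {u..w}" for s using e3[of s] that w by auto
  qed auto
  have e1: "\<bar>g1 w - g1 u - g2 u * (w - u) - g3 u * (w - u)^2 / 2\<bar> \<le> M * (w - u)^3 / 6" if w: "w \<in> {u..v}" for w
  proof (rule bound_step[where g="\<lambda>s. g1 s - g1 u - g2 u * (s - u) - g3 u * (s - u)^2 / 2" and ph="\<lambda>s. M * (s - u)^3 / 6" and g'="\<lambda>s. g2 s - g2 u - g3 u * (s - u)" and ph'="\<lambda>s. M * (s - u)^2 / 2"])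
    show "u \<le> w" using w by auto
    show "((\<lambda>s. g1 s - g1 u - g2 u * (s - u) - g3 u * (s - u)^2 / 2) has_real_derivative g2 s - g2 u - g3 u * (s - u)) (at s within {u..w})" if "s \<in> {u..w}" for s
      using d1'[OF w that] by (auto intro!: derivative_eq_intros simp: power2_eq_square field_simps)
    show "((\<lambda>s. M * (s - u)^3 / 6) has_real_derivative M * (s - u)^2 / 2) (at s within {u..w})" for s
      by (auto intro!: derivative_eq_intros simp: power2_eq_square field_simps)
    show "\<bar>g2 s - g2 u - g3 u * (s - u)\<bar> \<le> M * (s - u)^2 / 2" if "s \<in> {u..w}" for s using e2[of s] that w by auto
  qed auto
  show "\<bar>g1 v - g1 u - g2 u * (v - u) - g3 u * (v - u)^2 / 2\<bar> \<le> M * (v - u)^3 / 6"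
    using e1[of v] uv by auto
  show "\<bar>g0 v - g0 u - g1 u * (v - u) - g2 u * (v - u)^2 / 2 - g3 u * (v - u)^3 / 6\<bar> \<le> M * (v - u)^4 / 24"
  proof (rule bound_step[where g="\<lambda>s. g0 s - g0 u - g1 u * (s - u) - g2 u * (s - u)^2 / 2 - g3 u * (s - u)^3 / 6" and ph="\<lambda>s. M * (s - u)^4 / 24" and g'="\<lambda>s. g1 s - g1 u - g2 u * (s - u) - g3 u * (s - u)^2 / 2" and ph'="\<lambda>s. M * (s - u)^3 / 6"])
    show "u \<le> v" using uv by auto
    show "((\<lambda>s. g0 s - g0 u - g1 u * (s - u) - g2 u * (s - u)^2 / 2 - g3 u * (s - u)^3 / 6) has_real_derivative g1 s - g1 u - g2 u * (s - u) - g3 u * (s - u)^2 / 2) (at s within {u..v})" if "s \<in> {u..v}" for s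
      using d0[OF that] by (auto intro!: derivative_eq_intros simp: power2_eq_square power3_eq_cube field_simps)
    show "((\<lambda>s. M * (s - u)^4 / 24) has_real_derivative M * (s - u)^3 / 6) (at s within {u..v})" for s
      by (auto intro!: derivative_eq_intros simp: power2_eq_square power3_eq_cube field_simps)
    show "\<bar>g1 s - g1 u - g2 u * (s - u) - g3 u * (s - u)^2 / 2\<bar> \<le> M * (s - u)^3 / 6" if "s \<in> {u..v}" for s using e1[of s] that by auto
  qed auto
qed

lemma refl_deriv:
  fixes g :: "real \<Rightarrow> real"
  assumes "(g has_real_derivative D) (at (- s) within {v..u})"
  shows "((\<lambda>s. g (- s)) has_real_derivative - D) (at s within {- u..- v})"
proof -
  have im: "uminus ` {- u..- v} = {v..u::real}" by simp
  have "(g \<circ> uminus has_real_derivative D * (-1)) (at s within {- u..- v})"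
    by (rule DERIV_image_chain) (use assms im in \<open>auto intro!: derivative_eq_intros\<close>)
  then show ?thesis by (simp add: o_def)
qed

lemma taylor2:
  fixes g0 g1 g2 g3 g4 :: "real \<Rightarrow> real"
  assumes d0: "\<And>s. s \<in> {a..b} \<Longrightarrow> (g0 has_real_derivative g1 s) (at s within {a..b})"
    and d1: "\<And>s. s \<in> {a..b} \<Longrightarrow> (g1 has_real_derivative g2 s) (at s within {a..b})"
    and d2: "\<And>s. s \<in> {a..b} \<Longrightarrow> (g2 has_real_derivative g3 s) (at s within {a..b})"
    and d3: "\<And>s. s \<in> {a..b} \<Longrightarrow> (g3 has_real_derivative g4 s) (at s within {a..b})"
    and b: "\<And>s. s \<in> {a..b} \<Longrightarrow> \<bar>g4 s\<bar> \<le> M"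
    and u: "u \<in> {a..b}" and v: "v \<in> {a..b}"
  shows "\<bar>g1 v - g1 u - g2 u * (v - u) - g3 u * (v - u)^2 / 2\<bar> \<le> M * \<bar>v - u\<bar>^3 / 6"
    and "\<bar>g0 v - g0 u - g1 u * (v - u) - g2 u * (v - u)^2 / 2 - g3 u * (v - u)^3 / 6\<bar> \<le> M * \<bar>v - u\<bar>^4 / 24"
proof -
  have "(\<bar>g1 v - g1 u - g2 u * (v - u) - g3 u * (v - u)^2 / 2\<bar> \<le> M * \<bar>v - u\<bar>^3 / 6) \<and>
    (\<bar>g0 v - g0 u - g1 u * (v - u) - g2 u * (v - u)^2 / 2 - g3 u * (v - u)^3 / 6\<bar> \<le> M * \<bar>v - u\<bar>^4 / 24)"
  proof (cases "u \<le> v")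
    case True
    have sub: "{u..v} \<subseteq> {a..b}" using u v by auto
    note T = taylor_fwd[OF True, of g0 g1 g2 g3 g4 M]
    have "\<bar>g1 v - g1 u - g2 u * (v - u) - g3 u * (v - u)^2 / 2\<bar> \<le> M * (v - u)^3 / 6"
      "\<bar>g0 v - g0 u - g1 u * (v - u) - g2 u * (v - u)^2 / 2 - g3 u * (v - u)^3 / 6\<bar> \<le> M * (v - u)^4 / 24"
      by (rule T; (rule has_field_derivative_subset[OF _ sub], (rule d0 d1 d2 d3), use sub in blast)?; use b sub in blast)+
    then show ?thesis using True by auto
  next
    case False
    then have vu: "- u \<le> - v" by auto
    have sub: "{v..u} \<subseteq> {a..b}" using u v by auto
    have R: "((\<lambda>s. g (- s)) has_real_derivative - g' (- s)) (at s within {- u..- v})"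
      if "\<And>s. s \<in> {a..b} \<Longrightarrow> (g has_real_derivative g' s) (at s within {a..b})" "s \<in> {- u..- v}" for g g' s
      by (rule refl_deriv, rule has_field_derivative_subset[OF _ sub], rule that(1)) (use that(2) sub in auto)
    have R': "((\<lambda>s. - g (- s)) has_real_derivative g' (- s)) (at s within {- u..- v})"
      if "\<And>s. s \<in> {a..b} \<Longrightarrow> (g has_real_derivative g' s) (at s within {a..b})" "s \<in> {- u..- v}" for g g' s
      using DERIV_minus[OF R[OF that]] by simp
    note T = taylor_fwd[OF vu, of "\<lambda>s. g0 (- s)" "\<lambda>s. - g1 (- s)" "\<lambda>s. g2 (- s)" "\<lambda>s. - g3 (- s)" "\<lambda>s. g4 (- s)" M]
    have A: "\<bar>- g1 v + g1 u - g2 u * (- v - - u) - - g3 u * (- v - - u)^2 / 2\<bar> \<le> M * (- v - - u)^3 / 6"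
      "\<bar>g0 v - g0 u - - g1 u * (- v - - u) - g2 u * (- v - - u)^2 / 2 - - g3 u * (- v - - u)^3 / 6\<bar> \<le> M * (- v - - u)^4 / 24"
      using T R[OF d0] R'[OF d1] R[OF d2] R'[OF d3] b sub by auto
    have e: "\<bar>v - u\<bar> = - v - - u" using False by auto
    have e1: "g1 v - g1 u - g2 u * (v - u) - g3 u * (v - u)^2 / 2 = - (- g1 v + g1 u - g2 u * (- v - - u) - - g3 u * (- v - - u)^2 / 2)"
      by (simp add: power2_eq_square field_simps)
    have e2: "g0 v - g0 u - g1 u * (v - u) - g2 u * (v - u)^2 / 2 - g3 u * (v - u)^3 / 6 = g0 v - g0 u - - g1 u * (- v - - u) - g2 u * (- v - - u)^2 / 2 - - g3 u * (- v - - u)^3 / 6"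
      by (simp add: power2_eq_square power3_eq_cube field_simps)
    show ?thesis unfolding e e1 e2 abs_minus_cancel using A by simp
  qed
  then show "\<bar>g1 v - g1 u - g2 u * (v - u) - g3 u * (v - u)^2 / 2\<bar> \<le> M * \<bar>v - u\<bar>^3 / 6"
    and "\<bar>g0 v - g0 u - g1 u * (v - u) - g2 u * (v - u)^2 / 2 - g3 u * (v - u)^3 / 6\<bar> \<le> M * \<bar>v - u\<bar>^4 / 24" by auto
qed

lemma res_id:
  fixes p q fu g1 g2 g3 E1 E2 E3 E4 :: real
  assumes "0 < p" "0 < q"
  shows "3 * (q / (p + q) * ((fu - (fu - g1 * p + g2 * p^2 / 2 - g3 * p^3 / 6 + E1)) / p)
           + p / (p + q) * (((fu + g1 * q + g2 * q^2 / 2 + g3 * q^3 / 6 + E2) - fu) / q))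
      - (q / (p + q) * (g1 - g2 * p + g3 * p^2 / 2 + E3) + 2 * g1 + p / (p + q) * (g1 + g2 * q + g3 * q^2 / 2 + E4))
    = 3 * (- (q / (p + q)) * (E1 / p) + p / (p + q) * (E2 / q)) - q / (p + q) * E3 - p / (p + q) * E4"
proof -
  have pq: "p + q \<noteq> 0" using assms by auto
  have h1: "p * inverse p = 1" "q * inverse q = 1" "(p + q) * inverse (p + q) = 1" using assms pq by auto
  show ?thesis unfolding divide_inverse using h1 by algebra
qed

lemma residual_bound:
  fixes f f1 f2 f3 f4 :: "real \<Rightarrow> real"
  assumes d0: "\<And>s. s \<in> {a..b} \<Longrightarrow> (f has_real_derivative f1 s) (at s within {a..b})"
    and d1: "\<And>s. s \<in> {a..b} \<Longrightarrow> (f1 has_real_derivative f2 s) (at s within {a..b})"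
    and d2: "\<And>s. s \<in> {a..b} \<Longrightarrow> (f2 has_real_derivative f3 s) (at s within {a..b})"
    and d3: "\<And>s. s \<in> {a..b} \<Longrightarrow> (f3 has_real_derivative f4 s) (at s within {a..b})"
    and bd: "\<And>s. s \<in> {a..b} \<Longrightarrow> \<bar>f4 s\<bar> \<le> L"
    and A: "A \<in> {a..b}" and u: "u \<in> {a..b}" and B: "B \<in> {a..b}"
    and p: "0 < p" "p \<le> H" "A = u - p" and q: "0 < q" "q \<le> H" "B = u + q"
  shows "\<bar>3 * (q / (p + q) * ((f u - f A) / p) + p / (p + q) * ((f B - f u) / q))
          - (q / (p + q) * f1 A + 2 * f1 u + p / (p + q) * f1 B)\<bar> \<le> L * H^3"
proof -
  have L0: "0 \<le> L" using bd[OF u] by linarith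
  define E1 where "E1 = f A - f u - f1 u * (A - u) - f2 u * (A - u)^2 / 2 - f3 u * (A - u)^3 / 6"
  define E2 where "E2 = f B - f u - f1 u * (B - u) - f2 u * (B - u)^2 / 2 - f3 u * (B - u)^3 / 6"
  define E3 where "E3 = f1 A - f1 u - f2 u * (A - u) - f3 u * (A - u)^2 / 2"
  define E4 where "E4 = f1 B - f1 u - f2 u * (B - u) - f3 u * (B - u)^2 / 2"
  note T1 = taylor2[OF d0 d1 d2 d3 bd u A] and T2 = taylor2[OF d0 d1 d2 d3 bd u B]
  have aA: "\<bar>A - u\<bar> = p" and aB: "\<bar>B - u\<bar> = q" using p q by auto
  have b1: "\<bar>E1\<bar> \<le> L * p^4 / 24" using T1(2) unfolding E1_def aA .
  have b2: "\<bar>E2\<bar> \<le> L * q^4 / 24" using T2(2) unfolding E2_def aB .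
  have b3: "\<bar>E3\<bar> \<le> L * p^3 / 6" using T1(1) unfolding E3_def aA .
  have b4: "\<bar>E4\<bar> \<le> L * q^3 / 6" using T2(1) unfolding E4_def aB .
  have id: "3 * (q / (p + q) * ((f u - f A) / p) + p / (p + q) * ((f B - f u) / q))
          - (q / (p + q) * f1 A + 2 * f1 u + p / (p + q) * f1 B)
       = 3 * (- (q / (p + q)) * (E1 / p) + p / (p + q) * (E2 / q)) - q / (p + q) * E3 - p / (p + q) * E4"
  proof -
    have r1: "f A = f u - f1 u * p + f2 u * p^2 / 2 - f3 u * p^3 / 6 + E1"
      unfolding E1_def p(3) by (simp add: power2_eq_square power3_eq_cube algebra_simps)
    have r2: "f B = f u + f1 u * q + f2 u * q^2 / 2 + f3 u * q^3 / 6 + E2"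
      unfolding E2_def q(3) by (simp add: power2_eq_square power3_eq_cube algebra_simps)
    have r3: "f1 A = f1 u - f2 u * p + f3 u * p^2 / 2 + E3"
      unfolding E3_def p(3) by (simp add: power2_eq_square power3_eq_cube algebra_simps)
    have r4: "f1 B = f1 u + f2 u * q + f3 u * q^2 / 2 + E4"
      unfolding E4_def q(3) by (simp add: power2_eq_square power3_eq_cube algebra_simps)
    show ?thesis unfolding r1 r2 r3 r4 by (rule res_id[OF p(1) q(1)])
  qed
  have fr1: "\<bar>q / (p + q)\<bar> \<le> 1" and fr2: "\<bar>p / (p + q)\<bar> \<le> 1" using p(1) q(1) by auto
  have pH: "p^3 \<le> H^3" and qH: "q^3 \<le> H^3" using p q by (auto intro: power_mono)
  have t1: "\<bar>E1 / p\<bar> \<le> L * H^3 / 24"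
  proof -
    have "\<bar>E1 / p\<bar> = \<bar>E1\<bar> / p" using p(1) by simp
    also have "\<dots> \<le> (L * p^4 / 24) / p" using b1 p(1) by (intro divide_right_mono) auto
    also have "\<dots> = L * p^3 / 24" using p(1) by (simp add: power_eq_if)
    also have "\<dots> \<le> L * H^3 / 24" using pH L0 by (intro divide_right_mono mult_left_mono) auto
    finally show ?thesis .
  qed
  have t2: "\<bar>E2 / q\<bar> \<le> L * H^3 / 24"
  proof -
    have "\<bar>E2 / q\<bar> = \<bar>E2\<bar> / q" using q(1) by simp
    also have "\<dots> \<le> (L * q^4 / 24) / q" using b2 q(1) by (intro divide_right_mono) auto
    also have "\<dots> = L * q^3 / 24" using q(1) by (simp add: power_eq_if)
    also have "\<dots> \<le> L * H^3 / 24" using qH L0 by (intro divide_right_mono mult_left_mono) auto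
    finally show ?thesis .
  qed
  have t3: "\<bar>E3\<bar> \<le> L * H^3 / 6" using b3 pH L0 by (smt (verit) mult_left_mono divide_right_mono)
  have t4: "\<bar>E4\<bar> \<le> L * H^3 / 6" using b4 qH L0 by (smt (verit) mult_left_mono divide_right_mono)
  have m: "\<bar>c * y\<bar> \<le> K'" if "\<bar>c\<bar> \<le> 1" "\<bar>y\<bar> \<le> K'" for c y K' :: real
  proof -
    have "\<bar>c * y\<bar> = \<bar>c\<bar> * \<bar>y\<bar>" by (simp add: abs_mult)
    also have "\<dots> \<le> 1 * K'" using that by (intro mult_mono) auto
    finally show ?thesis by simp
  qed
  have "\<bar>3 * (- (q / (p + q)) * (E1 / p) + p / (p + q) * (E2 / q)) - q / (p + q) * E3 - p / (p + q) * E4\<bar>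
      \<le> 3 * (L * H^3 / 24 + L * H^3 / 24) + L * H^3 / 6 + L * H^3 / 6"
  proof -
    have fr1': "\<bar>- (q / (p + q))\<bar> \<le> 1" using fr1 by simp
    have g: "\<bar>3 * (X1 + X2) - X3 - X4\<bar> \<le> 3 * (c1 + c1) + c2 + c2"
      if "\<bar>X1\<bar> \<le> c1" "\<bar>X2\<bar> \<le> c1" "\<bar>X3\<bar> \<le> c2" "\<bar>X4\<bar> \<le> c2" for X1 X2 X3 X4 c1 c2 :: real
      using that by (simp add: abs_le_iff)
    show ?thesis by (rule g[OF m[OF fr1' t1] m[OF fr2 t2] m[OF fr1 t3] m[OF fr2 t4]])
  qed
  also have "\<dots> \<le> L * H^3" using L0 p by (simp add: field_simps)
  finally show ?thesis unfolding id .
qed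

lemma max_principle:
  fixes e r la mu :: "nat \<Rightarrow> real" and n :: nat
  assumes e1: "e 1 = 0" and en: "e n = 0" and n1: "1 \<le> n" and R0: "0 \<le> R"
    and eq: "\<And>i. i \<in> {2..n-1} \<Longrightarrow> 0 \<le> la i \<and> 0 \<le> mu i \<and> la i + mu i = 1 \<and>
                la i * e (i - 1) + 2 * e i + mu i * e (Suc i) = r i \<and> \<bar>r i\<bar> \<le> R"
  shows "\<forall>i\<in>{1..n}. \<bar>e i\<bar> \<le> R"
proof -
  define M where "M = Max ((\<lambda>i. \<bar>e i\<bar>) ` {1..n})"
  have fin: "finite ((\<lambda>i. \<bar>e i\<bar>) ` {1..n})" and ne: "(\<lambda>i. \<bar>e i\<bar>) ` {1..n} \<noteq> {}" using n1 by auto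
  have Mge: "\<bar>e i\<bar> \<le> M" if "i \<in> {1..n}" for i
    unfolding M_def using fin that by (intro Max_ge) auto
  obtain j where j: "j \<in> {1..n}" "M = \<bar>e j\<bar>" using Max_in[OF fin ne] unfolding M_def by auto
  have "M \<le> R"
  proof (cases "j = 1 \<or> j = n")
    case True
    then show ?thesis using j e1 en R0 by auto
  next
    case False
    then have jj: "j \<in> {2..n-1}" using j by auto
    note E = eq[OF jj]
    have a1: "\<bar>e (j - 1)\<bar> \<le> M" using jj by (intro Mge) auto
    have a2: "\<bar>e (Suc j)\<bar> \<le> M" using jj by (intro Mge) auto
    have "\<bar>la j * e (j - 1)\<bar> \<le> la j * M" using E a1 by (simp add: abs_mult mult_left_mono)
    moreover have "\<bar>mu j * e (Suc j)\<bar> \<le> mu j * M" using E a2 by (simp add: abs_mult mult_left_mono)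
    moreover have "la j * M + mu j * M = M" using E by (metis distrib_right mult_1)
    ultimately show ?thesis using E j(2) by (simp add: abs_le_iff) linarith
  qed
  then show ?thesis using Mge by force
qed

lemma cubic_second:
  fixes ca cb cc cd u v :: real
  assumes "u < v"
  shows "2 * cc + 6 * cd * u = (6 * (((ca + cb * v + cc * v^2 + cd * v^3) - (ca + cb * u + cc * u^2 + cd * u^3)) / (v - u))
            - 4 * (cb + 2 * cc * u + 3 * cd * u^2) - 2 * (cb + 2 * cc * v + 3 * cd * v^2)) / (v - u)"
    and "2 * cc + 6 * cd * v = (- 6 * (((ca + cb * v + cc * v^2 + cd * v^3) - (ca + cb * u + cc * u^2 + cd * u^3)) / (v - u))
            + 2 * (cb + 2 * cc * u + 3 * cd * u^2) + 4 * (cb + 2 * cc * v + 3 * cd * v^2)) / (v - u)"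
proof -
  have h: "(v - u) * inverse (v - u) = 1" using assms by auto
  show "2 * cc + 6 * cd * u = (6 * (((ca + cb * v + cc * v^2 + cd * v^3) - (ca + cb * u + cc * u^2 + cd * u^3)) / (v - u))
            - 4 * (cb + 2 * cc * u + 3 * cd * u^2) - 2 * (cb + 2 * cc * v + 3 * cd * v^2)) / (v - u)"
    unfolding divide_inverse using h by algebra
  show "2 * cc + 6 * cd * v = (- 6 * (((ca + cb * v + cc * v^2 + cd * v^3) - (ca + cb * u + cc * u^2 + cd * u^3)) / (v - u))
            + 2 * (cb + 2 * cc * u + 3 * cd * u^2) + 4 * (cb + 2 * cc * v + 3 * cd * v^2)) / (v - u)"
    unfolding divide_inverse using h by algebra
qed

lemma knot_alg:
  fixes a b F0 F1 F2 m0 m1 :: real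
  assumes "0 < a" "0 < b"
    and "b / (a + b) * F0 + 2 * F1 + a / (a + b) * F2 = 3 * (b / (a + b) * m0 + a / (a + b) * m1)"
  shows "(- 6 * m0 + 2 * F0 + 4 * F1) / a = (6 * m1 - 4 * F1 - 2 * F2) / b"
proof -
  have h: "a * inverse a = 1" "b * inverse b = 1" "(a + b) * inverse (a + b) = 1" using assms(1,2) by auto
  show ?thesis using assms(3) h unfolding divide_inverse by algebra
qed

lemma piece_deriv:
  fixes F gL gR :: "real \<Rightarrow> real"
  assumes t: "t \<in> S" and d: "0 < \<delta>"
    and L: "\<And>s. s \<in> S \<Longrightarrow> t - \<delta> < s \<Longrightarrow> s \<le> t \<Longrightarrow> F s = gL s"
    and R: "\<And>s. s \<in> S \<Longrightarrow> t \<le> s \<Longrightarrow> s < t + \<delta> \<Longrightarrow> F s = gR s"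
    and dL: "(gL has_real_derivative D) (at t)" and dR: "(gR has_real_derivative D) (at t)"
  shows "(F has_real_derivative D) (at t within S)"
proof -
  have 1: "(F has_real_derivative D) (at t within (S \<inter> {..t}))"
    by (rule has_field_derivative_transform_within[OF has_field_derivative_at_within[OF dL] d])
       (use t L in \<open>auto simp: dist_real_def\<close>)
  have 2: "(F has_real_derivative D) (at t within (S \<inter> {t..}))"
    by (rule has_field_derivative_transform_within[OF has_field_derivative_at_within[OF dR] d])
       (use t R in \<open>auto simp: dist_real_def\<close>)
  have S: "S = (S \<inter> {..t}) \<union> (S \<inter> {t..})" by auto
  show ?thesis using 1 2 unfolding has_field_derivative_iff
    by (subst S) (simp only: Lim_within_Un)
qed

lemma piece_cont:
  fixes F gL gR :: "real \<Rightarrow> real"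
  assumes t: "t \<in> S" and d: "0 < \<delta>"
    and L: "\<And>s. s \<in> S \<Longrightarrow> t - \<delta> < s \<Longrightarrow> s \<le> t \<Longrightarrow> F s = gL s"
    and R: "\<And>s. s \<in> S \<Longrightarrow> t \<le> s \<Longrightarrow> s < t + \<delta> \<Longrightarrow> F s = gR s"
    and dL: "isCont gL t" and dR: "isCont gR t"
  shows "continuous (at t within S) F"
proof -
  have 1: "continuous (at t within (S \<inter> {..t})) F"
    by (rule continuous_transform_within[OF continuous_at_imp_continuous_at_within[OF dL] d])
       (use t L in \<open>auto simp: dist_real_def\<close>)
  have 2: "continuous (at t within (S \<inter> {t..})) F"
    by (rule continuous_transform_within[OF continuous_at_imp_continuous_at_within[OF dR] d])
       (use t R in \<open>auto simp: dist_real_def\<close>)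
  have S: "S = (S \<inter> {..t}) \<union> (S \<inter> {t..})" by auto
  show ?thesis using 1 2 unfolding continuous_within
    by (subst S) (simp only: Lim_within_Un)
qed

lemma piece_all:
  fixes P P1 P2 qL qLd qLe qR qRd qRe :: "real \<Rightarrow> real"
  assumes t: "t \<in> S" and d: "0 < \<delta>"
    and L: "\<And>s. s \<in> S \<Longrightarrow> t - \<delta> < s \<Longrightarrow> s \<le> t \<Longrightarrow> P s = qL s \<and> P1 s = qLd s \<and> P2 s = qLe s"
    and R: "\<And>s. s \<in> S \<Longrightarrow> t \<le> s \<Longrightarrow> s < t + \<delta> \<Longrightarrow> P s = qR s \<and> P1 s = qRd s \<and> P2 s = qRe s"
    and dL: "(qL has_real_derivative qLd t) (at t)" and dR: "(qR has_real_derivative qRd t) (at t)"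
    and dL1: "(qLd has_real_derivative qLe t) (at t)" and dR1: "(qRd has_real_derivative qRe t) (at t)"
    and cL: "isCont qLe t" and cR: "isCont qRe t"
    and e1: "qLd t = qRd t" and e2: "qLe t = qRe t"
  shows "(P has_real_derivative P1 t) (at t within S) \<and> (P1 has_real_derivative P2 t) (at t within S)
    \<and> continuous (at t within S) P2"
proof -
  have p1: "P1 t = qLd t" and p2: "P2 t = qLe t" using L[OF t] d by auto
  show ?thesis unfolding p1 p2
  proof (intro conjI)
    show "(P has_real_derivative qLd t) (at t within S)"
      by (rule piece_deriv[OF t d, of _ qL qR]) (use L R dL dR e1 in auto)
    show "(P1 has_real_derivative qLe t) (at t within S)"
      by (rule piece_deriv[OF t d, of _ qLd qRd]) (use L R dL1 dR1 e2 in auto)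
    show "continuous (at t within S) P2"
      by (rule piece_cont[OF t d, of _ qLe qRe]) (use L R cL cR in auto)
  qed
qed

lemma xmono:
  fixes x :: "nat \<Rightarrow> real"
  assumes m: "\<forall>i\<in>{1..<n}. x i < x (Suc i)"
  shows "1 \<le> i \<Longrightarrow> i < j \<Longrightarrow> j \<le> n \<Longrightarrow> x i < x j"
proof (induct j)
  case 0
  then show ?case by simp
next
  case (Suc j)
  show ?case
  proof (cases "i = j")
    case True
    then show ?thesis using m Suc.prems by auto
  next
    case False
    then have "x i < x j" using Suc by auto
    also have "x j < x (Suc j)" using m Suc.prems False by auto
    finally show ?thesis .
  qed
qed

lemma c2_part:
  fixes x :: "nat \<Rightarrow> real" and n :: nat and f P :: "real \<Rightarrow> real" and F :: "nat \<Rightarrow> real"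
    and E :: "real set"
  assumes mono: "\<forall>i\<in>{1..<n}. x i < x (Suc i)" and n2: "2 \<le> n"
    and herm: "pw_cubic_hermite x n f F P"
    and match: "\<And>j. j \<in> {2..n-1} \<Longrightarrow> x j \<notin> E \<Longrightarrow>
       lam x (j-1) * F (j-1) + 2 * F j + mu x (j-1) * F (Suc j)
         = 3 * (lam x (j-1) * slope f x (j-1) + mu x (j-1) * slope f x j)"
  shows "C2_except_on {x 1..x n} E P"
proof -
  have "\<forall>i\<in>{1..<n}. \<exists>c::real\<times>real\<times>real\<times>real.
     (\<forall>t\<in>{x i..x (Suc i)}. P t = fst c + fst (snd c) * t + fst (snd (snd c)) * t^2 + snd (snd (snd c)) * t^3) \<and>
        P (x i) = f (x i) \<and> P (x (Suc i)) = f (x (Suc i)) \<and>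
        fst (snd c) + 2 * fst (snd (snd c)) * x i + 3 * snd (snd (snd c)) * (x i)^2 = F i \<and>
        fst (snd c) + 2 * fst (snd (snd c)) * x (Suc i) + 3 * snd (snd (snd c)) * (x (Suc i))^2 = F (Suc i)"
  proof
    fix i assume "i \<in> {1..<n}"
    then obtain c0 c1 c2 c3 where "(\<forall>t\<in>{x i..x (Suc i)}. P t = c0 + c1 * t + c2 * t^2 + c3 * t^3) \<and>
        P (x i) = f (x i) \<and> P (x (Suc i)) = f (x (Suc i)) \<and>
        c1 + 2 * c2 * x i + 3 * c3 * (x i)^2 = F i \<and>
        c1 + 2 * c2 * x (Suc i) + 3 * c3 * (x (Suc i))^2 = F (Suc i)"
      using herm unfolding pw_cubic_hermite_def by blast
    then show "\<exists>c::real\<times>real\<times>real\<times>real.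
     (\<forall>t\<in>{x i..x (Suc i)}. P t = fst c + fst (snd c) * t + fst (snd (snd c)) * t^2 + snd (snd (snd c)) * t^3) \<and>
        P (x i) = f (x i) \<and> P (x (Suc i)) = f (x (Suc i)) \<and>
        fst (snd c) + 2 * fst (snd (snd c)) * x i + 3 * snd (snd (snd c)) * (x i)^2 = F i \<and>
        fst (snd c) + 2 * fst (snd (snd c)) * x (Suc i) + 3 * snd (snd (snd c)) * (x (Suc i))^2 = F (Suc i)"
      by (intro exI[of _ "(c0, c1, c2, c3)"]) simp
  qed
  from bchoice[OF this] obtain C :: "nat \<Rightarrow> real\<times>real\<times>real\<times>real" where C: "\<forall>i\<in>{1..<n}.
     (\<forall>t\<in>{x i..x (Suc i)}. P t = fst (C i) + fst (snd (C i)) * t + fst (snd (snd (C i))) * t^2 + snd (snd (snd (C i))) * t^3) \<and>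
        P (x i) = f (x i) \<and> P (x (Suc i)) = f (x (Suc i)) \<and>
        fst (snd (C i)) + 2 * fst (snd (snd (C i))) * x i + 3 * snd (snd (snd (C i))) * (x i)^2 = F i \<and>
        fst (snd (C i)) + 2 * fst (snd (snd (C i))) * x (Suc i) + 3 * snd (snd (snd (C i))) * (x (Suc i))^2 = F (Suc i)"
    by blast
  define a0 where "a0 i = fst (C i)" for i
  define a1 where "a1 i = fst (snd (C i))" for i
  define a2 where "a2 i = fst (snd (snd (C i)))" for i
  define a3 where "a3 i = snd (snd (snd (C i)))" for i
  define Q where "Q i t = a0 i + a1 i * t + a2 i * t^2 + a3 i * t^3" for i t
  define Q1 where "Q1 i t = a1 i + 2 * a2 i * t + 3 * a3 i * t^2" for i t
  define Q2 where "Q2 i t = 2 * a2 i + 6 * a3 i * t" for i t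
  have QP: "P t = Q i t" if "i \<in> {1..<n}" "t \<in> {x i..x (Suc i)}" for i t
    using C that unfolding Q_def a0_def a1_def a2_def a3_def by blast
  have Q1L: "Q1 i (x i) = F i" and Q1R: "Q1 i (x (Suc i)) = F (Suc i)" if "i \<in> {1..<n}" for i
    using C that unfolding Q1_def a0_def a1_def a2_def a3_def by auto
  have QL: "Q i (x i) = f (x i)" and QR: "Q i (x (Suc i)) = f (x (Suc i))" if i: "i \<in> {1..<n}" for i
  proof -
    have lt: "x i < x (Suc i)" using mono i by auto
    have "P (x i) = Q i (x i)" by (rule QP[OF i]) (use lt in auto)
    then show "Q i (x i) = f (x i)" using C i by auto
    have "P (x (Suc i)) = Q i (x (Suc i))" by (rule QP[OF i]) (use lt in auto)
    then show "Q i (x (Suc i)) = f (x (Suc i))" using C i by auto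
  qed
  have Q2L: "Q2 i (x i) = (6 * slope f x i - 4 * F i - 2 * F (Suc i)) / hh x i"
   and Q2R: "Q2 i (x (Suc i)) = (- 6 * slope f x i + 2 * F i + 4 * F (Suc i)) / hh x i"
    if i: "i \<in> {1..<n}" for i
  proof -
    have lt: "x i < x (Suc i)" using mono i by auto
    note cs = cubic_second[OF lt, where ca="a0 i" and cb="a1 i" and cc="a2 i" and cd="a3 i"]
    have sl: "slope f x i = (Q i (x (Suc i)) - Q i (x i)) / (x (Suc i) - x i)"
      unfolding slope_def hh_def QL[OF i] QR[OF i] ..
    show "Q2 i (x i) = (6 * slope f x i - 4 * F i - 2 * F (Suc i)) / hh x i"
      unfolding sl Q2_def hh_def Q1L[OF i, symmetric] Q1R[OF i, symmetric] unfolding Q_def Q1_def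
      by (rule cs(1))
    show "Q2 i (x (Suc i)) = (- 6 * slope f x i + 2 * F i + 4 * F (Suc i)) / hh x i"
      unfolding sl Q2_def hh_def Q1L[OF i, symmetric] Q1R[OF i, symmetric] unfolding Q_def Q1_def
      by (rule cs(2))
  qed
  have KM: "Q2 (j - 1) (x j) = Q2 j (x j)" if j: "j \<in> {2..n-1}" "x j \<notin> E" for j
  proof -
    have j1: "j - 1 \<in> {1..<n}" and j2: "j \<in> {1..<n}" and sj: "Suc (j - 1) = j" using j by auto
    have pa: "0 < hh x (j - 1)" using mono j1 sj unfolding hh_def by (metis diff_gt_0_iff_gt)
    have pb: "0 < hh x j" using mono j2 unfolding hh_def by auto
    have "(- 6 * slope f x (j - 1) + 2 * F (j - 1) + 4 * F j) / hh x (j - 1) = (6 * slope f x j - 4 * F j - 2 * F (Suc j)) / hh x j"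
      by (rule knot_alg[OF pa pb], use match[OF j] in \<open>unfold lam_def mu_def sj\<close>)
    then show ?thesis using Q2R[OF j1] Q2L[OF j2] sj by simp
  qed
  define ok where "ok i s \<longleftrightarrow> i \<in> {1..<n} \<and> x i \<le> s \<and> s \<le> x (Suc i)" for i s
  define P1 where "P1 s = Q1 (SOME i. ok i s) s" for s
  define P2 where "P2 s = Q2 (SOME i. ok i s) s" for s
  have uniq: "k = Suc i \<and> s = x k" if "ok i s" "ok k s" "i < k" for i k s
  proof -
    have "\<not> Suc i < k"
    proof
      assume "Suc i < k"
      then have "x (Suc i) < x k" using xmono[OF mono, of "Suc i" k] that unfolding ok_def by auto
      then show False using that unfolding ok_def by auto
    qed
    then have "k = Suc i" using that by auto
    then show ?thesis using that unfolding ok_def by auto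
  qed
  have AG: "P s = Q i s \<and> P1 s = Q1 i s \<and> ((x i < s \<and> s < x (Suc i)) \<or> s \<notin> E \<longrightarrow> P2 s = Q2 i s)"
    if oi: "ok i s" for i s
  proof -
    define k where "k = (SOME i. ok i s)"
    have ok: "ok k s" unfolding k_def using oi by (rule someI)
    have p1: "P1 s = Q1 k s" and p2: "P2 s = Q2 k s" unfolding P1_def P2_def k_def by auto
    have p0: "P s = Q i s" using oi QP unfolding ok_def by auto
    consider "k = i" | "i < k" | "k < i" by linarith
    then show ?thesis
    proof cases
      case 1
      then show ?thesis using p0 p1 p2 by auto
    next
      case 2
      then have kk: "k = Suc i" "s = x k" using uniq[OF oi ok] by auto
      have i1: "i \<in> {1..<n}" and k1: "k \<in> {1..<n}" using oi ok unfolding ok_def by auto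
      have "Q1 i s = Q1 k s" using Q1R[OF i1] Q1L[OF k1] kk by simp
      moreover have "s \<notin> E \<longrightarrow> Q2 i s = Q2 k s"
        using KM[of k] k1 kk i1 by auto
      ultimately show ?thesis using p0 p1 p2 kk by auto
    next
      case 3
      then have kk: "i = Suc k" "s = x i" using uniq[OF ok oi] by auto
      have i1: "i \<in> {1..<n}" and k1: "k \<in> {1..<n}" using oi ok unfolding ok_def by auto
      have "Q1 i s = Q1 k s" using Q1R[OF k1] Q1L[OF i1] kk by simp
      moreover have "s \<notin> E \<longrightarrow> Q2 i s = Q2 k s"
        using KM[of i] k1 kk i1 by auto
      ultimately show ?thesis using p0 p1 p2 kk by auto
    qed
  qed
  have AG': "P s = Q i s \<and> P1 s = Q1 i s \<and> P2 s = Q2 i s"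
    if "ok i s" "(x i < s \<and> s < x (Suc i)) \<or> s \<notin> E" for i s
    using AG[OF that(1)] that(2) by blast
  have Qf: "Q i = (\<lambda>t. a0 i + a1 i * t + a2 i * t^2 + a3 i * t^3)" for i
    by (rule ext) (simp add: Q_def)
  have Q1f: "Q1 i = (\<lambda>t. a1 i + 2 * a2 i * t + 3 * a3 i * t^2)" for i
    by (rule ext) (simp add: Q1_def)
  have Q2f: "Q2 i = (\<lambda>t. 2 * a2 i + 6 * a3 i * t)" for i
    by (rule ext) (simp add: Q2_def)
  have dQ: "(Q i has_real_derivative Q1 i t) (at t)" for i t
    unfolding Qf Q1_def by (auto intro!: derivative_eq_intros simp: power2_eq_square)
  have dQ1: "(Q1 i has_real_derivative Q2 i t) (at t)" for i t
    unfolding Q1f Q2_def by (auto intro!: derivative_eq_intros simp: power2_eq_square)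
  have cQ2: "isCont (Q2 i) t" for i t
    unfolding Q2f by (intro continuous_intros)
  define S where "S = {x 1..x n}"
  define G where "G t \<longleftrightarrow> (P has_real_derivative P1 t) (at t within S) \<and> (P1 has_real_derivative P2 t) (at t within S)
    \<and> continuous (at t within S) P2" for t
  have PA: "G t" if t: "t \<in> S" and d: "0 < \<delta>"
    and L: "\<And>s. s \<in> S \<Longrightarrow> t - \<delta> < s \<Longrightarrow> s \<le> t \<Longrightarrow> ok il s \<and> ((x il < s \<and> s < x (Suc il)) \<or> s \<notin> E)"
    and R: "\<And>s. s \<in> S \<Longrightarrow> t \<le> s \<Longrightarrow> s < t + \<delta> \<Longrightarrow> ok ir s \<and> ((x ir < s \<and> s < x (Suc ir)) \<or> s \<notin> E)"
    and e1: "Q1 il t = Q1 ir t" and e2: "Q2 il t = Q2 ir t" for t \<delta> il ir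
    unfolding G_def
    by (rule piece_all[OF t d _ _ dQ[of il t] dQ[of ir t] dQ1[of il t] dQ1[of ir t] cQ2[of t il] cQ2[of t ir] e1 e2];
        use AG' L R in blast)
  have cover: "\<exists>i. ok i t" if "t \<in> S" for t
  proof -
    define I where "I = {i\<in>{1..<n}. x i \<le> t}"
    have I1: "1 \<in> I" using that n2 by (auto simp: I_def S_def)
    have fin: "finite I" by (auto simp: I_def)
    define i where "i = Max I"
    have iI: "i \<in> I" using Max_in[OF fin] I1 unfolding i_def by auto
    have "t \<le> x (Suc i)"
    proof (cases "Suc i < n")
      case True
      show ?thesis
      proof (rule ccontr)
        assume "\<not> ?thesis"
        then have "Suc i \<in> I" using True by (auto simp: I_def)
        then have "Suc i \<le> i" using Max_ge[OF fin] unfolding i_def by blast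
        then show False by simp
      qed
    next
      case False
      then have "Suc i = n" using iI by (auto simp: I_def)
      then show ?thesis using that by (simp add: S_def)
    qed
    then show ?thesis using iI unfolding ok_def I_def by auto
  qed
  have hpos: "0 < hh x i" if "i \<in> {1..<n}" for i using mono that unfolding hh_def by auto
  have knot: "G (x j)" if j: "j \<in> {1..<n}" "x j \<notin> E" for j
  proof (cases "j = 1")
    case True
    show ?thesis
    proof (rule PA[where \<delta>="hh x 1" and il=1 and ir=1])
      show "x j \<in> S" using j xmono[OF mono, of j n] by (auto simp: S_def True)
      show "0 < hh x 1" using hpos n2 by auto
      show "ok 1 s \<and> ((x 1 < s \<and> s < x (Suc 1)) \<or> s \<notin> E)" if "s \<in> S" "x j - hh x 1 < s" "s \<le> x j" for s
        using that j True hpos[of 1] n2 unfolding ok_def S_def hh_def by auto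
      show "ok 1 s \<and> ((x 1 < s \<and> s < x (Suc 1)) \<or> s \<notin> E)" if "s \<in> S" "x j \<le> s" "s < x j + hh x 1" for s
        using that j True hpos[of 1] n2 unfolding ok_def S_def hh_def by (cases "s = x 1") auto
    qed auto
  next
    case False
    then have j2: "2 \<le> j" using j by auto
    have jm: "j - 1 \<in> {1..<n}" and sj: "Suc (j - 1) = j" using j2 j by auto
    have hp1: "0 < hh x (j - 1)" using hpos[OF jm] .
    have hp2: "0 < hh x j" using hpos j by auto
    show ?thesis
    proof (rule PA[where \<delta>="min (hh x (j - 1)) (hh x j)" and il="j - 1" and ir=j])
      show "x j \<in> S" using j xmono[OF mono, of 1 j] xmono[OF mono, of j n] j2 by (auto simp: S_def less_imp_le)
      show "0 < min (hh x (j - 1)) (hh x j)" using hp1 hp2 by auto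
      show "ok (j - 1) s \<and> ((x (j - 1) < s \<and> s < x (Suc (j - 1))) \<or> s \<notin> E)"
        if "s \<in> S" "x j - min (hh x (j - 1)) (hh x j) < s" "s \<le> x j" for s
        using that j jm unfolding ok_def sj hh_def by (cases "s = x j") auto
      show "ok j s \<and> ((x j < s \<and> s < x (Suc j)) \<or> s \<notin> E)"
        if "s \<in> S" "x j \<le> s" "s < x j + min (hh x (j - 1)) (hh x j)" for s
        using that j unfolding ok_def hh_def by (cases "s = x j") auto
      show "Q1 (j - 1) (x j) = Q1 j (x j)" using Q1R[OF jm] Q1L[OF j(1)] sj by simp
      show "Q2 (j - 1) (x j) = Q2 j (x j)" using KM[of j] j j2 by auto
    qed
  qed
  have lastk: "G (x n)" if "x n \<notin> E"
  proof -
    have jm: "n - 1 \<in> {1..<n}" and sj: "Suc (n - 1) = n" using n2 by auto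
    have hp1: "0 < hh x (n - 1)" using hpos[OF jm] .
    show ?thesis
    proof (rule PA[where \<delta>="hh x (n - 1)" and il="n - 1" and ir="n - 1"])
      show "x n \<in> S" using xmono[OF mono, of 1 n] n2 by (auto simp: S_def less_imp_le)
      show "0 < hh x (n - 1)" using hp1 .
      show "ok (n - 1) s \<and> ((x (n - 1) < s \<and> s < x (Suc (n - 1))) \<or> s \<notin> E)"
        if "s \<in> S" "x n - hh x (n - 1) < s" "s \<le> x n" for s
        using that jm \<open>x n \<notin> E\<close> unfolding ok_def sj hh_def by (cases "s = x n") auto
      show "ok (n - 1) s \<and> ((x (n - 1) < s \<and> s < x (Suc (n - 1))) \<or> s \<notin> E)"
        if "s \<in> S" "x n \<le> s" "s < x n + hh x (n - 1)" for s
        using that jm \<open>x n \<notin> E\<close> hp1 unfolding ok_def sj hh_def S_def by auto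
    qed auto
  qed
  have inner: "G t" if i: "ok i t" "x i < t" "t < x (Suc i)" for i t
  proof (rule PA[where \<delta>="min (t - x i) (x (Suc i) - t)" and il=i and ir=i])
    show "t \<in> S" using i xmono[OF mono, of 1 i] xmono[OF mono, of "Suc i" n] unfolding ok_def S_def
      by (cases "i = 1"; cases "Suc i = n") auto
    show "0 < min (t - x i) (x (Suc i) - t)" using i by auto
    show "ok i s \<and> ((x i < s \<and> s < x (Suc i)) \<or> s \<notin> E)"
      if "s \<in> S" "t - min (t - x i) (x (Suc i) - t) < s" "s \<le> t" for s
      using that i unfolding ok_def by auto
    show "ok i s \<and> ((x i < s \<and> s < x (Suc i)) \<or> s \<notin> E)"
      if "s \<in> S" "t \<le> s" "s < t + min (t - x i) (x (Suc i) - t)" for s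
      using that i unfolding ok_def by auto
  qed auto
  have allG: "G t" if t: "t \<in> S - E" for t
  proof -
    obtain i where i: "ok i t" using cover t by auto
    consider "x i < t \<and> t < x (Suc i)" | "t = x i" | "t = x (Suc i)" using i unfolding ok_def by fastforce
    then show ?thesis
    proof cases
      case 1 then show ?thesis using inner i by auto
    next
      case 2 then show ?thesis using knot[of i] i t unfolding ok_def by auto
    next
      case 3
      show ?thesis
      proof (cases "Suc i = n")
        case True then show ?thesis using lastk 3 t by auto
      next
        case False then show ?thesis using knot[of "Suc i"] i t 3 unfolding ok_def by auto
      qed
    qed
  qed
  show ?thesis unfolding C2_except_on_def
  proof (intro exI conjI ballI)
    show "(P has_real_derivative P1 t) (at t within {x 1..x n})" if "t \<in> {x 1..x n} - E" for t
      using allG[of t] that unfolding G_def S_def by auto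
    show "(P1 has_real_derivative P2 t) (at t within {x 1..x n})" if "t \<in> {x 1..x n} - E" for t
      using allG[of t] that unfolding G_def S_def by auto
    show "continuous_on ({x 1..x n} - E) P2"
      unfolding continuous_on_eq_continuous_within
      using allG unfolding G_def S_def by (blast intro: continuous_within_subset)
  qed
qed

theorem proposition1:
  fixes a b L K T :: real and f f1 f2 f3 f4 :: "real \<Rightarrow> real"
  assumes "a < b"
    and "\<And>t. t \<in> {a..b} \<Longrightarrow> (f has_real_derivative f1 t) (at t within {a..b})"
    and "\<And>t. t \<in> {a..b} \<Longrightarrow> (f1 has_real_derivative f2 t) (at t within {a..b})"
    and "\<And>t. t \<in> {a..b} \<Longrightarrow> (f2 has_real_derivative f3 t) (at t within {a..b})"
    and "\<And>t. t \<in> {a..b} \<Longrightarrow> (f3 has_real_derivative f4 t) (at t within {a..b})"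
    and "continuous_on {a..b} f4"
    and "L > 0" and "\<And>t. t \<in> {a..b} \<Longrightarrow> \<bar>f4 t\<bar> \<le> L"
    and "K > 0" and "T > 0"
  shows "\<exists>C>0. \<forall>(n::nat) (x::nat \<Rightarrow> real) (fd::nat \<Rightarrow> real) (i0::nat) (p::real) (ft::real).
     (\<forall>i\<in>{1..<n}. x i < x (Suc i)) \<longrightarrow> x 1 = a \<longrightarrow> x n = b \<longrightarrow>
     (\<forall>i\<in>{1..<n}. hmax x n / hh x i \<le> K) \<longrightarrow>
     spline_slopes f f1 x n fd \<longrightarrow>
     1 < i0 \<longrightarrow> i0 < n \<longrightarrow> p > 0 \<longrightarrow>
     \<bar>f1 (x i0) - ft\<bar> = T * hmax x n powr p \<longrightarrow>
     (let F = (\<lambda>i. if i = i0 then ft else fd i) in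
       (\<forall>i\<in>{1..n}. \<bar>F i - f1 (x i)\<bar> \<le>
           C * (if i = i0 then hmax x n powr p else hmax x n ^ 3)) \<and>
       (\<forall>P. pw_cubic_hermite x n f F P \<longrightarrow>
           C2_except_on {x 1..x n} {x (i0 - 1), x i0, x (Suc i0)} P))"
proof (intro exI[of _ "L + T"] conjI allI impI)
  show "0 < L + T" using assms(7,10) by simp
  fix n :: nat and x :: "nat \<Rightarrow> real" and fd :: "nat \<Rightarrow> real" and i0 :: nat and p :: real and ft :: real
  assume mono: "\<forall>i\<in>{1..<n}. x i < x (Suc i)" and x1: "x 1 = a" and xn: "x n = b"
    and Kc: "\<forall>i\<in>{1..<n}. hmax x n / hh x i \<le> K" and sp: "spline_slopes f f1 x n fd"
    and i01: "1 < i0" and i0n: "i0 < n" and pp: "p > 0"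
    and ftc: "\<bar>f1 (x i0) - ft\<bar> = T * hmax x n powr p"
  define H where "H = hmax x n"
  have n2: "2 \<le> n" using i01 i0n by auto
  have fin: "finite ((\<lambda>i. hh x i) ` {1..<n})" by auto
  have hH: "hh x i \<le> H" if "i \<in> {1..<n}" for i
    unfolding H_def hmax_def using fin that by (intro Max_ge) auto
  have hpos: "0 < hh x i" if "i \<in> {1..<n}" for i using mono that unfolding hh_def by auto
  have H0: "0 < H" using hH[of 1] hpos[of 1] n2 by auto
  have xab: "x k \<in> {a..b}" if "k \<in> {1..n}" for k
  proof -
    have "x 1 \<le> x k" using xmono[OF mono, of 1 k] that by (cases "k = 1") (auto simp: less_imp_le)
    moreover have "x k \<le> x n" using xmono[OF mono, of k n] that by (cases "k = n") (auto simp: less_imp_le)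
    ultimately show ?thesis using x1 xn by auto
  qed
  define e where "e k = fd k - f1 (x k)" for k
  define r where "r i = lam x (i - 1) * e (i - 1) + 2 * e i + mu x (i - 1) * e (Suc i)" for i
  have ebound: "\<forall>i\<in>{1..n}. \<bar>e i\<bar> \<le> L * H^3"
  proof (rule max_principle[where la="\<lambda>i. lam x (i - 1)" and mu="\<lambda>i. mu x (i - 1)" and r=r])
    show "e 1 = 0" "e n = 0" using sp unfolding spline_slopes_def e_def by auto
    show "1 \<le> n" using n2 by auto
    show "0 \<le> L * H^3" using assms(7) H0 by simp
    fix i assume i: "i \<in> {2..n-1}"
    have i1: "i - 1 \<in> {1..<n}" and i2: "i \<in> {1..<n}" and si: "Suc (i - 1) = i" using i by auto
    have pa: "0 < hh x (i - 1)" using hpos[OF i1] .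
    have pb: "0 < hh x i" using hpos[OF i2] .
    have la: "lam x (i - 1) = hh x i / (hh x (i - 1) + hh x i)" unfolding lam_def si ..
    have mu: "mu x (i - 1) = hh x (i - 1) / (hh x (i - 1) + hh x i)" unfolding mu_def si ..
    have "0 \<le> lam x (i - 1)" "0 \<le> mu x (i - 1)" using pa pb la mu by auto
    moreover have "lam x (i - 1) + mu x (i - 1) = 1" using pa pb unfolding la mu add_divide_distrib[symmetric] by simp
    moreover have "\<bar>r i\<bar> \<le> L * H^3"
    proof -
      have xA: "x (i - 1) \<in> {a..b}" by (rule xab) (use i in auto)
      have xu: "x i \<in> {a..b}" by (rule xab) (use i in auto)
      have xB: "x (Suc i) \<in> {a..b}" by (rule xab) (use i in auto)
      have eq: "lam x (i - 1) * fd (i - 1) + 2 * fd i + mu x (i - 1) * fd (Suc i)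
          = 3 * (lam x (i - 1) * slope f x (i - 1) + mu x (i - 1) * slope f x i)"
        using sp i unfolding spline_slopes_def by auto
      have "r i = 3 * (lam x (i - 1) * slope f x (i - 1) + mu x (i - 1) * slope f x i)
          - (lam x (i - 1) * f1 (x (i - 1)) + 2 * f1 (x i) + mu x (i - 1) * f1 (x (Suc i)))"
        unfolding r_def e_def eq[symmetric] by (simp add: algebra_simps)
      also have "\<bar>\<dots>\<bar> \<le> L * H^3"
        unfolding la mu slope_def si
        apply (rule residual_bound[OF assms(2-5) assms(8), where A="x (i - 1)" and u="x i" and B="x (Suc i)"
              and p="hh x (i - 1)" and q="hh x i" and H=H])
        using xA xu xB pa pb hH[OF i1] hH[OF i2] si
        by (auto simp: hh_def)
      finally show ?thesis .
    qed
    ultimately show "0 \<le> lam x (i - 1) \<and> 0 \<le> mu x (i - 1) \<and> lam x (i - 1) + mu x (i - 1) = 1 \<and>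
         lam x (i - 1) * e (i - 1) + 2 * e i + mu x (i - 1) * e (Suc i) = r i \<and> \<bar>r i\<bar> \<le> L * H^3"
      unfolding r_def by auto
  qed
  define F where "F = (\<lambda>i. if i = i0 then ft else fd i)"
  have part1: "\<forall>i\<in>{1..n}. \<bar>F i - f1 (x i)\<bar> \<le> (L + T) * (if i = i0 then hmax x n powr p else hmax x n ^ 3)"
  proof
    fix i assume i: "i \<in> {1..n}"
    show "\<bar>F i - f1 (x i)\<bar> \<le> (L + T) * (if i = i0 then hmax x n powr p else hmax x n ^ 3)"
    proof (cases "i = i0")
      case True
      have "\<bar>F i - f1 (x i)\<bar> = T * H powr p" using ftc True unfolding F_def H_def by (simp add: abs_minus_commute)
      also have "\<dots> \<le> (L + T) * H powr p" using assms(7) by (intro mult_right_mono) auto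
      finally show ?thesis using True unfolding H_def by simp
    next
      case False
      have "\<bar>F i - f1 (x i)\<bar> \<le> L * H^3" using ebound i False unfolding F_def e_def by auto
      also have "\<dots> \<le> (L + T) * H^3" using assms(10) H0 by (intro mult_right_mono) auto
      finally show ?thesis using False unfolding H_def by simp
    qed
  qed
  have part2: "C2_except_on {x 1..x n} {x (i0 - 1), x i0, x (Suc i0)} P" if herm: "pw_cubic_hermite x n f F P" for P
  proof (rule c2_part[OF mono n2 herm])
    fix j assume j: "j \<in> {2..n-1}" "x j \<notin> {x (i0 - 1), x i0, x (Suc i0)}"
    then have "j \<noteq> i0 - 1" "j \<noteq> i0" "j \<noteq> Suc i0" by auto
    then have Fe: "F (j - 1) = fd (j - 1)" "F j = fd j" "F (Suc j) = fd (Suc j)"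
      using j i01 unfolding F_def by auto
    show "lam x (j - 1) * F (j - 1) + 2 * F j + mu x (j - 1) * F (Suc j)
         = 3 * (lam x (j - 1) * slope f x (j - 1) + mu x (j - 1) * slope f x j)"
      unfolding Fe using sp j unfolding spline_slopes_def by auto
  qed
  show "let F = (\<lambda>i. if i = i0 then ft else fd i) in
       (\<forall>i\<in>{1..n}. \<bar>F i - f1 (x i)\<bar> \<le> (L + T) * (if i = i0 then hmax x n powr p else hmax x n ^ 3)) \<and>
       (\<forall>P. pw_cubic_hermite x n f F P \<longrightarrow> C2_except_on {x 1..x n} {x (i0 - 1), x i0, x (Suc i0)} P)"
    unfolding Let_def F_def[symmetric] using part1 part2 by blast
qed

end
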